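(* Let $(S,d)$ be a metric space and let $P$ be a non-empty subset of $S$ with the induced metric. If $f\in\mathrm{BL}(P)$ and $g\in\mathrm{BL}(S)$ are such that $|f\vee g|_P|_L=|f|_L$ and $|f\vee g|_P|_L\ge|g|_L$, then $$\mathcal{E}^{S,0}_P(f\vee g|_P)\vee g=\mathcal{E}^{S,0}_P(f)\vee g.$$
   Context: $\mathrm{BL}(T)$ is the space of bounded real-valued Lipschitz functions on a metric space $T$, $|f|_L=\sup_{x\neq y}|f(x)-f(y)|/d(x,y)$ (with $|f|_L=0$ on a singleton), $\vee$ denotes pointwise maximum, and $g|_P$ is the restriction of $g$ to $P$. For $f\in\mathrm{BL}(P)$, $\mathcal{E}^{S,0}_P f(x)=\sup_{p\in P}[f(p)-|f|_L d(p,x)]$ for $x\in S$. *)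

theory Defs
  imports "HOL-Analysis.Analysis"
begin

text \<open>Functions on a subset P of a metric space are represented as total functions
  'a => real whose values outside P are irrelevant.\<close>

definition BL :: "'a::metric_space set \<Rightarrow> ('a \<Rightarrow> real) \<Rightarrow> bool" where
  "BL P f \<longleftrightarrow> bounded (f ` P) \<and>
     (\<exists>L. \<forall>x\<in>P. \<forall>y\<in>P. \<bar>f x - f y\<bar> \<le> L * dist x y)"

definition lip_const :: "'a::metric_space set \<Rightarrow> ('a \<Rightarrow> real) \<Rightarrow> real" where
  "lip_const P f =
     (if \<exists>x\<in>P. \<exists>y\<in>P. x \<noteq> y
      then (SUP xy\<in>{(x,y). x \<in> P \<and> y \<in> P \<and> x \<noteq> y}.
              \<bar>f (fst xy) - f (snd xy)\<bar> / dist (fst xy) (snd xy))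
      else 0)"

definition ext0 :: "'a::metric_space set \<Rightarrow> ('a \<Rightarrow> real) \<Rightarrow> 'a \<Rightarrow> real" where
  "ext0 P f x = (SUP p\<in>P. f p - lip_const P f * dist p x)"

end

theory Submission
  imports Defs
begin

lemma lip_UNIV_facts:
  fixes g :: "'a::metric_space \<Rightarrow> real"
  assumes "BL UNIV g"
  shows "lip_const UNIV g \<ge> 0" "\<And>p x. g p - g x \<le> lip_const UNIV g * dist p x"
proof -
  obtain M where M: "\<forall>x y. \<bar>g x - g y\<bar> \<le> M * dist x y" using assms unfolding BL_def by auto
  let ?S = "{(x,y). x \<in> (UNIV::'a set) \<and> y \<in> UNIV \<and> x \<noteq> y}"
  let ?r = "\<lambda>xy. \<bar>g (fst xy) - g (snd xy)\<bar> / dist (fst xy) (snd xy)"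
  have bdd: "bdd_above (?r ` ?S)"
  proof (rule bdd_aboveI2)
    fix xy assume "xy \<in> ?S"
    then have "dist (fst xy) (snd xy) > 0" by auto
    then show "?r xy \<le> M" using M by (simp add: divide_le_eq)
  qed
  have up: "?r (p,x) \<le> lip_const UNIV g" if "p \<noteq> x" for p x
  proof -
    have "\<exists>x\<in>(UNIV::'a set). \<exists>y\<in>UNIV. x \<noteq> y" using that by blast
    then have "lip_const UNIV g = (SUP xy\<in>?S. ?r xy)" unfolding lip_const_def by simp
    moreover have "?r (p,x) \<le> (SUP xy\<in>?S. ?r xy)"
      by (rule cSUP_upper[OF _ bdd]) (use that in auto)
    ultimately show ?thesis by simp
  qed
  show "lip_const UNIV g \<ge> 0"
  proof (cases "\<exists>x\<in>(UNIV::'a set). \<exists>y\<in>UNIV. x \<noteq> y")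
    case True
    then obtain p x :: 'a where "p \<noteq> x" by blast
    from up[OF this] show ?thesis by (smt (verit) divide_nonneg_nonneg abs_ge_zero zero_le_dist)
  next
    case False then show ?thesis unfolding lip_const_def by simp
  qed
  fix p x
  show "g p - g x \<le> lip_const UNIV g * dist p x"
  proof (cases "p = x")
    case True then show ?thesis by simp
  next
    case False
    then have d: "dist p x > 0" by simp
    from up[OF False] have "\<bar>g p - g x\<bar> / dist p x \<le> lip_const UNIV g" by simp
    then have "\<bar>g p - g x\<bar> \<le> lip_const UNIV g * dist p x" using d by (simp add: divide_le_eq)
    then show ?thesis by simp
  qed
qed

theorem corollary4p4:
  fixes P :: "'a::metric_space set" and f g :: "'a \<Rightarrow> real"
  assumes "P \<noteq> {}"
    and "BL P f" and "BL UNIV g"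
    and "lip_const P (\<lambda>x. max (f x) (g x)) = lip_const P f"
    and "lip_const P (\<lambda>x. max (f x) (g x)) \<ge> lip_const UNIV g"
  shows "\<forall>x. max (ext0 P (\<lambda>y. max (f y) (g y)) x) (g x) = max (ext0 P f x) (g x)"
proof
  fix x
  define L where "L = lip_const P f"
  note gf = lip_UNIV_facts[OF assms(3)]
  have L0: "L \<ge> 0" using gf(1) assms(4,5) L_def by linarith
  have gle: "g p - L * dist p x \<le> g x" for p
  proof -
    have "lip_const UNIV g * dist p x \<le> L * dist p x"
      using assms(4,5) L_def by (simp add: mult_right_mono)
    then show ?thesis using gf(2)[of p x] by linarith
  qed
  obtain M where M: "\<forall>p\<in>P. \<bar>f p\<bar> \<le> M" using assms(2) unfolding BL_def bounded_iff by auto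
  have ale: "f p - L * dist p x \<le> M" if "p \<in> P" for p
    using M that L0 by (smt (verit) mult_nonneg_nonneg zero_le_dist)
  have bddf: "bdd_above ((\<lambda>p. f p - L * dist p x) ` P)"
    by (rule bdd_aboveI2[where M=M]) (use ale in auto)
  have bddh: "bdd_above ((\<lambda>p. max (f p) (g p) - L * dist p x) ` P)"
    by (rule bdd_aboveI2[where M="max M (g x)"]) (use ale gle in \<open>smt (verit)\<close>)
  have eh: "ext0 P (\<lambda>y. max (f y) (g y)) x = (SUP p\<in>P. max (f p) (g p) - L * dist p x)"
    unfolding ext0_def using assms(4) L_def by simp
  have ef: "ext0 P f x = (SUP p\<in>P. f p - L * dist p x)"
    unfolding ext0_def L_def by simp
  have 1: "(SUP p\<in>P. max (f p) (g p) - L * dist p x) \<le> max (SUP p\<in>P. f p - L * dist p x) (g x)"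
  proof (rule cSUP_least[OF assms(1)])
    fix p assume p: "p \<in> P"
    have "f p - L * dist p x \<le> (SUP p\<in>P. f p - L * dist p x)"
      by (rule cSUP_upper[OF p bddf])
    then show "max (f p) (g p) - L * dist p x \<le> max (SUP p\<in>P. f p - L * dist p x) (g x)"
      using gle[of p] by linarith
  qed
  have 2: "(SUP p\<in>P. f p - L * dist p x) \<le> (SUP p\<in>P. max (f p) (g p) - L * dist p x)"
  proof (rule cSUP_least[OF assms(1)])
    fix p assume p: "p \<in> P"
    have "max (f p) (g p) - L * dist p x \<le> (SUP p\<in>P. max (f p) (g p) - L * dist p x)"
      by (rule cSUP_upper[OF p bddh])
    then show "f p - L * dist p x \<le> (SUP p\<in>P. max (f p) (g p) - L * dist p x)" by linarith
  qed
  show "max (ext0 P (\<lambda>y. max (f y) (g y)) x) (g x) = max (ext0 P f x) (g x)"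
    unfolding eh ef using 1 2 by linarith
qed

end
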